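(* Let $\Omega$ be a distribution of $\Sigma$, $\mathsf{Obs}$ an observation function over $\Sigma$, and $(\sigma_N,P)\in\mathit{CED}(\Omega,\mathsf{Obs})$. (1) For every discrepancy $\delta\in\mathcal D(\sigma_N,P)$ and every $\sigma\in\mathsf{img}(P)$, $\sigma_N|_\delta\ne\sigma|_\delta$. Consequently there is no function $P':\Omega\cup\{\delta\}\to\mathsf{Dom}(\mathsf{Obs})$ extending $P$ with $P'(\delta)\in\mathsf{img}(P)$ such that $(\sigma_N,P')\in\mathit{CED}(\Omega\cup\{\delta\},\mathsf{Obs})$. (2) Conversely, let $\Omega'$ be any distribution of $\Sigma$ such that no $\delta\in\mathcal D(\sigma_N,P)$ is contained in any $\Sigma_j\in\Omega'$. Then for every $\Sigma_j\in\Omega'$ there is $\sigma\in\mathsf{img}(P)$ with $\sigma_N|_{\Sigma_j}=\sigma|_{\Sigma_j}$; hence there exists $P'':\Omega'\to\mathsf{img}(P)$ with $(\sigma_N,P'')\in\mathit{CED}(\Omega',\mathsf{Obs})$.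
   Context: $\sigma|_{\Sigma'}$ is the projection of a word onto $\Sigma'$ (subsequence of symbols in $\Sigma'$). A distribution of $\Sigma$ is a finite set of subsets of $\Sigma$ with union $\Sigma$. An observation function is a partial map $\mathsf{Obs}:\Sigma^\star\rightharpoonup\{+,-\}$ with finite domain. A counter-example to $\Omega\models\mathsf{Obs}$ is a pair $(\sigma_N,P)$ with $\sigma_N\in\mathsf{Dom}(\mathsf{Obs})$, $\mathsf{Obs}(\sigma_N)=-$, and $P:\Omega\to\mathsf{Dom}(\mathsf{Obs})$ such that for all $\Sigma_i\in\Omega$, $\mathsf{Obs}(P(\Sigma_i))=+$ and $\sigma_N|_{\Sigma_i}=P(\Sigma_i)|_{\Sigma_i}$; $\mathit{CED}(\Omega,\mathsf{Obs})$ is the set of these, and $\mathsf{img}(P)$ is the image of $P$. Discrepancies: for a word $w$ let $\Sigma^m(w)$ be the multiset of its symbols. For $\Sigma_i\in\Omega$, the multiplicity discrepancies are $\mathcal D_m^{\Sigma_i}(\sigma_N,P)=\{a\in\Sigma\mid a$ occurs a different number of times in $\sigma_N$ and in $P(\Sigma_i)\}$. Let $\theta=\Sigma\setminus\mathcal D_m^{\Sigma_i}(\sigma_N,P)$, $u=\sigma_N|_\theta$, $w=P(\Sigma_i)|_\theta$ (these are permutations of each other); let $\pi$ be the unique bijection of positions with $u[j]=w[\pi(j)]$ for all $j$ and such that $j<k$, $u[j]=u[k]$ imply $\pi(j)<\pi(k)$. The order discrepancies are $\mathcal D_o^{\Sigma_i}(\sigma_N,P)=\{\{u[j],u[k]\}\mid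 j<k,\ \pi(j)>\pi(k)\}$. A set $\delta\subseteq\Sigma$ is a discrepancy for $(\sigma_N,P)$ iff for every $\Sigma_i\in\Omega$, either $\delta\cap\mathcal D_m^{\Sigma_i}(\sigma_N,P)\neq\emptyset$ or some element of $\mathcal D_o^{\Sigma_i}(\sigma_N,P)$ is a subset of $\delta$; $\mathcal D(\sigma_N,P)$ is the set of all discrepancies. *)

theory Defs
  imports Main
begin

datatype verdict = Pos | Neg

definition proj :: "'a list \<Rightarrow> 'a set \<Rightarrow> 'a list" where
  "proj w S = filter (\<lambda>x. x \<in> S) w"

definition is_distribution :: "'a set \<Rightarrow> 'a set set \<Rightarrow> bool" where
  "is_distribution \<Sigma> \<Omega> \<longleftrightarrow> finite \<Omega> \<and> (\<forall>S\<in>\<Omega>. S \<subseteq> \<Sigma>) \<and> \<Union>\<Omega> = \<Sigma>"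

definition is_observation :: "'a set \<Rightarrow> ('a list \<Rightarrow> verdict option) \<Rightarrow> bool" where
  "is_observation \<Sigma> Obs \<longleftrightarrow> finite (dom Obs) \<and> dom Obs \<subseteq> lists \<Sigma>"

text \<open>Counter-examples (\<sigma>N, P) to \<Omega> |= Obs; P is a map \<Omega> \<rightarrow> Dom(Obs)
  (only its values on \<Omega> are relevant).\<close>
definition is_CED :: "'a set set \<Rightarrow> ('a list \<Rightarrow> verdict option) \<Rightarrow> 'a list \<Rightarrow> ('a set \<Rightarrow> 'a list) \<Rightarrow> bool" where
  "is_CED \<Omega> Obs \<sigma>N P \<longleftrightarrow>
     Obs \<sigma>N = Some Neg \<and>
     (\<forall>S\<in>\<Omega>. Obs (P S) = Some Pos \<and> proj \<sigma>N S = proj (P S) S)"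

definition Dm :: "'a set \<Rightarrow> 'a list \<Rightarrow> ('a set \<Rightarrow> 'a list) \<Rightarrow> 'a set \<Rightarrow> 'a set" where
  "Dm \<Sigma> \<sigma>N P S = {a \<in> \<Sigma>. count_list \<sigma>N a \<noteq> count_list (P S) a}"

definition stable_perm :: "'a list \<Rightarrow> 'a list \<Rightarrow> nat \<Rightarrow> nat" where
  "stable_perm u w = (THE \<pi>. bij_betw \<pi> {..<length u} {..<length w} \<and>
        (\<forall>j<length u. u ! j = w ! (\<pi> j)) \<and>
        (\<forall>j k. j < k \<and> k < length u \<and> u ! j = u ! k \<longrightarrow> \<pi> j < \<pi> k) \<and>
        (\<forall>j. j \<ge> length u \<longrightarrow> \<pi> j = j))"

definition Do :: "'a set \<Rightarrow> 'a list \<Rightarrow> ('a set \<Rightarrow> 'a list) \<Rightarrow> 'a set \<Rightarrow> 'a set set" where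
  "Do \<Sigma> \<sigma>N P S =
    (let \<theta> = \<Sigma> - Dm \<Sigma> \<sigma>N P S; u = proj \<sigma>N \<theta>; w = proj (P S) \<theta>; \<pi> = stable_perm u w
     in {{u ! j, u ! k} | j k. j < k \<and> k < length u \<and> \<pi> j > \<pi> k})"

definition is_discrepancy :: "'a set \<Rightarrow> 'a set set \<Rightarrow> 'a list \<Rightarrow> ('a set \<Rightarrow> 'a list) \<Rightarrow> 'a set \<Rightarrow> bool" where
  "is_discrepancy \<Sigma> \<Omega> \<sigma>N P \<delta> \<longleftrightarrow> \<delta> \<subseteq> \<Sigma> \<and>
     (\<forall>S\<in>\<Omega>. \<delta> \<inter> Dm \<Sigma> \<sigma>N P S \<noteq> {} \<or> (\<exists>p\<in>Do \<Sigma> \<sigma>N P S. p \<subseteq> \<delta>))"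

definition Discr :: "'a set \<Rightarrow> 'a set set \<Rightarrow> 'a list \<Rightarrow> ('a set \<Rightarrow> 'a list) \<Rightarrow> 'a set set" where
  "Discr \<Sigma> \<Omega> \<sigma>N P = {\<delta>. is_discrepancy \<Sigma> \<Omega> \<sigma>N P \<delta>}"

end

theory Submission
  imports Defs
begin

fun idx :: "'b list \<Rightarrow> 'b \<Rightarrow> nat" where
  "idx [] y = 0"
| "idx (x#xs) y = (if x = y then 0 else Suc (idx xs y))"

lemma idx_in: "y \<in> set xs \<Longrightarrow> idx xs y < length xs \<and> xs ! idx xs y = y"
  by (induction xs) auto

lemma idx_nth: "distinct xs \<Longrightarrow> i < length xs \<Longrightarrow> idx xs (xs ! i) = i"
proof (induction xs arbitrary: i)
  case (Cons x xs)
  then show ?case by (cases i) auto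
qed simp

lemma idx_filter:
  "distinct xs \<Longrightarrow> p \<in> set xs \<Longrightarrow> q \<in> set xs \<Longrightarrow> P p \<Longrightarrow> P q \<Longrightarrow>
   (idx (filter P xs) p < idx (filter P xs) q) = (idx xs p < idx xs q)"
proof (induction xs)
  case (Cons x xs)
  show ?case
  proof (cases "x = p")
    case True
    then show ?thesis using Cons.prems by auto
  next
    case xp: False
    show ?thesis
    proof (cases "x = q")
      case True
      then show ?thesis using Cons.prems xp by auto
    next
      case False
      then have "p \<in> set xs" "q \<in> set xs" using Cons.prems xp by auto
      then show ?thesis using Cons.IH Cons.prems xp False by simp
    qed
  qed
qed simp

lemma list_eq_by_order:
  "distinct X \<Longrightarrow> distinct Y \<Longrightarrow> set X = set Y \<Longrightarrow>
   (\<forall>p\<in>set X. \<forall>q\<in>set X. idx X p < idx X q \<longrightarrow> idx Y p < idx Y q) \<Longrightarrow> X = Y"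
proof (induction X arbitrary: Y)
  case Nil
  then show ?case by simp
next
  case (Cons x X')
  then obtain y Y' where Y: "Y = y # Y'" by (cases Y) auto
  have "y = x"
  proof (rule ccontr)
    assume "y \<noteq> x"
    then have "y \<in> set X'" using Cons.prems(3) Y by auto
    then have "idx (x#X') x < idx (x#X') y" using \<open>y \<noteq> x\<close> by simp
    then have "idx Y x < idx Y y" using Cons.prems(4) \<open>y \<in> set X'\<close> by auto
    then show False using Y by simp
  qed
  have "X' = Y'"
  proof (rule Cons.IH)
    show "distinct X'" "distinct Y'" using Cons.prems Y by auto
    show "set X' = set Y'" using Cons.prems Y \<open>y = x\<close> by auto
    show "\<forall>p\<in>set X'. \<forall>q\<in>set X'. idx X' p < idx X' q \<longrightarrow> idx Y' p < idx Y' q"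
    proof (intro ballI impI)
      fix p q assume pq: "p \<in> set X'" "q \<in> set X'" "idx X' p < idx X' q"
      have "p \<noteq> x" "q \<noteq> x" using pq Cons.prems(1) by auto
      then have "idx (x#X') p < idx (x#X') q" using pq by simp
      then have "idx Y p < idx Y q" using Cons.prems(4) pq by auto
      then show "idx Y' p < idx Y' q" using Y \<open>y = x\<close> \<open>p \<noteq> x\<close> \<open>q \<noteq> x\<close> by simp
    qed
  qed
  then show ?case using Y \<open>y = x\<close> by simp
qed

definition ann :: "'b list \<Rightarrow> ('b \<times> nat) list" where
  "ann v = map (\<lambda>i. (v ! i, count_list (take i v) (v ! i))) [0..<length v]"

lemma ann_len[simp]: "length (ann v) = length v"
  by (simp add: ann_def)

lemma ann_nth: "i < length v \<Longrightarrow> ann v ! i = (v ! i, count_list (take i v) (v ! i))"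
  by (simp add: ann_def)

lemma ann_snoc: "ann (v @ [x]) = ann v @ [(x, count_list v x)]"
  by (auto simp: ann_def nth_append intro!: map_cong)

lemma ann_Nil[simp]: "ann [] = []" by (simp add: ann_def)

lemma ann_fst: "map fst (ann v) = v"
  by (induction v rule: rev_induct) (auto simp: ann_snoc)

lemma ann_set: "set (ann v) = {(x, c). c < count_list v x}"
proof (induction v rule: rev_induct)
  case (snoc x xs)
  show ?case
  proof (rule set_eqI)
    fix p :: "'a \<times> nat"
    obtain a b where p: "p = (a, b)" by (cases p)
    show "p \<in> set (ann (xs @ [x])) \<longleftrightarrow> p \<in> {(y, c). c < count_list (xs @ [x]) y}"
      using snoc by (cases "x = a") (auto simp: ann_snoc p)
  qed
qed simp

lemma ann_distinct: "distinct (ann v)"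
  by (induction v rule: rev_induct) (auto simp: ann_snoc ann_set)

lemma count_filter: "count_list (filter P v) a = (if P a then count_list v a else 0)"
  by (induction v) auto

lemma ann_filter: "ann (filter P v) = filter (\<lambda>p. P (fst p)) (ann v)"
  by (induction v rule: rev_induct) (auto simp: ann_snoc count_filter)

lemma count_take_le: "count_list (take i xs) a \<le> count_list xs a"
  by (induction xs arbitrary: i) (auto simp: take_Cons split: nat.splits)

lemma count_take_mono: "i \<le> i' \<Longrightarrow> count_list (take i v) a \<le> count_list (take i' v) a"
  by (metis count_take_le min.absorb1 take_take)

lemma count_take_Suc: "j < length v \<Longrightarrow>
   count_list (take (Suc j) v) a = count_list (take j v) a + (if v ! j = a then 1 else 0)"
  by (simp add: take_Suc_conv_app_nth)

definition pi0 :: "'b list \<Rightarrow> 'b list \<Rightarrow> nat \<Rightarrow> nat" where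
  "pi0 u w j = (if j < length u then idx (ann w) (ann u ! j) else j)"

lemma count_card: "j \<le> length u \<Longrightarrow> count_list (take j u) a = card {j'. j' < j \<and> u ! j' = a}"
proof -
  assume j: "j \<le> length u"
  have "count_list (take j u) a = card {i. i < length (take j u) \<and> a = take j u ! i}"
    by (simp add: count_list_eq_length_filter length_filter_conv_card)
  also have "{i. i < length (take j u) \<and> a = take j u ! i} = {j'. j' < j \<and> u ! j' = a}"
    using j by auto
  finally show ?thesis .
qed

context
  fixes u w :: "'b list"
  assumes cnt: "\<forall>a. count_list u a = count_list w a"
begin

lemma set_ann_eq: "set (ann u) = set (ann w)"
  using cnt by (simp add: ann_set)

lemma len_eq: "length u = length w"
proof -
  have "length (ann u) = length (ann w)"
    using set_ann_eq ann_distinct distinct_card by metis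
  then show ?thesis by simp
qed

lemma pi0_props: "j < length u \<Longrightarrow> pi0 u w j < length w \<and> ann w ! (pi0 u w j) = ann u ! j"
proof -
  assume j: "j < length u"
  then have "ann u ! j \<in> set (ann w)" using set_ann_eq nth_mem[of j "ann u"] by auto
  then show ?thesis using idx_in[of "ann u ! j" "ann w"] j by (simp add: pi0_def)
qed

lemma pi0_count: "j < length u \<Longrightarrow> w ! pi0 u w j = u ! j \<and>
    count_list (take (pi0 u w j) w) (u ! j) = count_list (take j u) (u ! j)"
  using pi0_props[of j] ann_nth[of j u] ann_nth[of "pi0 u w j" w] by auto

lemma pi0_valid: "bij_betw (pi0 u w) {..<length u} {..<length w} \<and>
        (\<forall>j<length u. u ! j = w ! (pi0 u w j)) \<and>
        (\<forall>j k. j < k \<and> k < length u \<and> u ! j = u ! k \<longrightarrow> pi0 u w j < pi0 u w k) \<and>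
        (\<forall>j. j \<ge> length u \<longrightarrow> pi0 u w j = j)"
proof (intro conjI allI impI)
  have inj: "inj_on (pi0 u w) {..<length u}"
  proof
    fix j k assume jk: "j \<in> {..<length u}" "k \<in> {..<length u}" "pi0 u w j = pi0 u w k"
    then have "ann u ! j = ann u ! k" using pi0_props[of j] pi0_props[of k] jk by auto
    then show "j = k" using jk ann_distinct[of u] by (simp add: nth_eq_iff_index_eq)
  qed
  have sub: "pi0 u w ` {..<length u} \<subseteq> {..<length w}" using pi0_props by auto
  have "card (pi0 u w ` {..<length u}) = card {..<length w}"
    using card_image[OF inj] len_eq by simp
  then have "pi0 u w ` {..<length u} = {..<length w}"
    using sub by (simp add: card_subset_eq)
  then show "bij_betw (pi0 u w) {..<length u} {..<length w}"
    using inj by (simp add: bij_betw_def)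
next
  fix j assume "j < length u"
  then show "u ! j = w ! pi0 u w j"
    using pi0_props[of j] len_eq by (metis ann_nth fst_conv)
next
  fix j k assume jk: "j < k \<and> k < length u \<and> u ! j = u ! k"
  define a where "a = u ! j"
  have pj: "pi0 u w j < length w" "ann w ! pi0 u w j = ann u ! j" using pi0_props jk by auto
  have pk: "pi0 u w k < length w" "ann w ! pi0 u w k = ann u ! k" using pi0_props jk by auto
  have cj: "count_list (take (pi0 u w j) w) a = count_list (take j u) a"
    using pi0_count[of j] jk by (simp add: a_def)
  have ck: "count_list (take (pi0 u w k) w) a = count_list (take k u) a"
    using pi0_count[of k] jk by (simp add: a_def)
  have "count_list (take (Suc j) u) a \<le> count_list (take k u) a"
    using jk count_take_mono[of "Suc j" k u a] by simp
  then have lt: "count_list (take j u) a < count_list (take k u) a"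
    using count_take_Suc[of j u a] jk by (simp add: a_def)
  show "pi0 u w j < pi0 u w k"
  proof (rule ccontr)
    assume "\<not> ?thesis"
    then have "count_list (take (pi0 u w k) w) a \<le> count_list (take (pi0 u w j) w) a"
      using count_take_mono[of "pi0 u w k" "pi0 u w j" w a] by simp
    then show False using cj ck lt by simp
  qed
next
  fix j :: nat assume "length u \<le> j" then show "pi0 u w j = j" by (simp add: pi0_def)
qed

lemma unique:
  assumes bij: "bij_betw \<pi> {..<length u} {..<length w}"
    and val: "\<forall>j<length u. u ! j = w ! (\<pi> j)"
    and st: "\<forall>j k. j < k \<and> k < length u \<and> u ! j = u ! k \<longrightarrow> \<pi> j < \<pi> k"
    and out: "\<forall>j. j \<ge> length u \<longrightarrow> \<pi> j = j"
  shows "\<pi> = pi0 u w"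
proof
  fix j
  show "\<pi> j = pi0 u w j"
  proof (cases "j < length u")
    case False then show ?thesis using out by (simp add: pi0_def)
  next
    case True
    define a where "a = u ! j"
    have pj: "\<pi> j < length w" using bij True by (auto simp: bij_betw_def)
    define A where "A = {j'. j' < j \<and> u ! j' = a}"
    define B where "B = {i. i < \<pi> j \<and> w ! i = a}"
    have inj: "inj_on \<pi> {..<length u}" using bij by (simp add: bij_betw_def)
    have AB: "\<pi> ` A \<subseteq> B"
    proof
      fix i assume "i \<in> \<pi> ` A"
      then obtain j' where j': "j' < j" "u ! j' = a" "i = \<pi> j'" by (auto simp: A_def)
      then show "i \<in> B" using st val True by (auto simp: B_def a_def)
    qed
    have BA: "B \<subseteq> \<pi> ` A"
    proof
      fix i assume i: "i \<in> B"
      then have "i < length w" using pj by (simp add: B_def)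
      then obtain j' where j': "j' < length u" "i = \<pi> j'"
        using bij by (metis bij_betw_def imageE lessThan_iff)
      then have ua: "u ! j' = a" using val i by (simp add: B_def)
      have "j' \<noteq> j" using i j' by (auto simp: B_def)
      moreover have "\<not> j < j'" using st[rule_format, of j j'] j' True ua i by (auto simp: B_def a_def)
      ultimately have "j' < j" by simp
      then show "i \<in> \<pi> ` A" using j' ua by (auto simp: A_def)
    qed
    have injA: "inj_on \<pi> A" by (rule inj_on_subset[OF inj]) (use True in \<open>auto simp: A_def\<close>)
    have "card A = card B"
      using AB BA card_image[OF injA] by simp
    then have "count_list (take (\<pi> j) w) a = count_list (take j u) a"
      using count_card[of j u a] count_card[of "\<pi> j" w a] True pj
      by (simp add: A_def B_def)
    then have "ann w ! \<pi> j = ann u ! j"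
      using pj True val by (simp add: ann_nth a_def)
    then have "idx (ann w) (ann u ! j) = \<pi> j"
      using idx_nth[OF ann_distinct, of "\<pi> j" w] pj by simp
    then show ?thesis using True by (simp add: pi0_def)
  qed
qed

lemma stable_perm_eq: "stable_perm u w = pi0 u w"
  unfolding stable_perm_def
  apply (rule the_equality)
   apply (rule pi0_valid)
  apply (elim conjE)
  apply (rule unique)
     apply assumption+
  done

end


lemma setup_cnt:
  "\<forall>a. count_list (proj \<sigma>N (\<Sigma> - Dm \<Sigma> \<sigma>N P S)) a = count_list (proj (P S) (\<Sigma> - Dm \<Sigma> \<sigma>N P S)) a"
  by (auto simp: proj_def count_filter Dm_def)

lemma Do_eq:
  assumes u: "u = proj \<sigma>N (\<Sigma> - Dm \<Sigma> \<sigma>N P S)" and w: "w = proj (P S) (\<Sigma> - Dm \<Sigma> \<sigma>N P S)"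
  shows "Do \<Sigma> \<sigma>N P S = {{u ! j, u ! k} | j k. j < k \<and> k < length u \<and> pi0 u w j > pi0 u w k}"
  using stable_perm_eq[OF setup_cnt[of \<sigma>N \<Sigma> P S]] u w by (simp add: Do_def Let_def)

lemma part1:
  assumes d: "is_discrepancy \<Sigma> \<Omega> \<sigma>N P \<delta>" and S: "S \<in> \<Omega>"
  shows "proj \<sigma>N \<delta> \<noteq> proj (P S) \<delta>"
proof
  assume eq: "proj \<sigma>N \<delta> = proj (P S) \<delta>"
  define \<theta> where "\<theta> = \<Sigma> - Dm \<Sigma> \<sigma>N P S"
  define u where "u = proj \<sigma>N \<theta>"
  define w where "w = proj (P S) \<theta>"
  have cnt: "\<forall>a. count_list u a = count_list w a" using setup_cnt u_def w_def \<theta>_def by metis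
  from d S have "\<delta> \<inter> Dm \<Sigma> \<sigma>N P S \<noteq> {} \<or> (\<exists>p\<in>Do \<Sigma> \<sigma>N P S. p \<subseteq> \<delta>)"
    by (auto simp: is_discrepancy_def)
  then show False
  proof
    assume "\<delta> \<inter> Dm \<Sigma> \<sigma>N P S \<noteq> {}"
    then obtain a where a: "a \<in> \<delta>" "count_list \<sigma>N a \<noteq> count_list (P S) a"
      by (auto simp: Dm_def)
    have "count_list (proj \<sigma>N \<delta>) a = count_list (proj (P S) \<delta>) a" using eq by simp
    then show False using a by (simp add: proj_def count_filter)
  next
    assume "\<exists>p\<in>Do \<Sigma> \<sigma>N P S. p \<subseteq> \<delta>"
    then obtain j k where jk: "j < k" "k < length u" "pi0 u w j > pi0 u w k" "u ! j \<in> \<delta>" "u ! k \<in> \<delta>"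
      using Do_eq[OF u_def[unfolded \<theta>_def] w_def[unfolded \<theta>_def]] by auto
    have fu: "filter (\<lambda>x. x \<in> \<delta>) u = filter (\<lambda>x. x \<in> \<theta>) (proj \<sigma>N \<delta>)"
      by (simp add: u_def proj_def filter_filter conj_commute)
    have fw: "filter (\<lambda>x. x \<in> \<delta>) w = filter (\<lambda>x. x \<in> \<theta>) (proj (P S) \<delta>)"
      by (simp add: w_def proj_def filter_filter conj_commute)
    have X: "filter (\<lambda>p. fst p \<in> \<delta>) (ann u) = filter (\<lambda>p. fst p \<in> \<delta>) (ann w)"
      using ann_filter[of "\<lambda>x. x \<in> \<delta>" u] ann_filter[of "\<lambda>x. x \<in> \<delta>" w] fu fw eq by simp
    define p where "p = ann u ! j"
    define q where "q = ann u ! k"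
    have jl: "j < length u" using jk by simp
    have pin: "p \<in> set (ann u)" "q \<in> set (ann u)" using jk jl by (auto simp: p_def q_def)
    have pinw: "p \<in> set (ann w)" "q \<in> set (ann w)" using pin set_ann_eq[OF cnt] by auto
    have fp: "fst p \<in> \<delta>" "fst q \<in> \<delta>" using jk jl by (auto simp: p_def q_def ann_nth)
    have iu: "idx (ann u) p = j" "idx (ann u) q = k"
      using idx_nth[OF ann_distinct, of j u] idx_nth[OF ann_distinct, of k u] jk jl by (auto simp: p_def q_def)
    have pw: "pi0 u w j < length (ann w)" "ann w ! pi0 u w j = p"
      using pi0_props[OF cnt jl] by (auto simp: p_def)
    have qw: "pi0 u w k < length (ann w)" "ann w ! pi0 u w k = q"
      using pi0_props[OF cnt jk(2)] by (auto simp: q_def)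
    have iw: "idx (ann w) p = pi0 u w j" "idx (ann w) q = pi0 u w k"
      using idx_nth[OF ann_distinct, of "pi0 u w j" w] idx_nth[OF ann_distinct, of "pi0 u w k" w] pw qw
      by auto
    have "idx (filter (\<lambda>p. fst p \<in> \<delta>) (ann u)) p < idx (filter (\<lambda>p. fst p \<in> \<delta>) (ann u)) q"
      using idx_filter[OF ann_distinct pin, of "\<lambda>p. fst p \<in> \<delta>"] fp iu jk by simp
    moreover have "\<not> idx (filter (\<lambda>p. fst p \<in> \<delta>) (ann w)) p < idx (filter (\<lambda>p. fst p \<in> \<delta>) (ann w)) q"
      using idx_filter[OF ann_distinct pinw, of "\<lambda>p. fst p \<in> \<delta>"] fp iw jk by simp
    ultimately show False using X by simp
  qed
qed

lemma part2:
  assumes Sj: "Sj \<subseteq> \<Sigma>" and dm: "Sj \<inter> Dm \<Sigma> \<sigma>N P S = {}" and nd: "\<not> (\<exists>p\<in>Do \<Sigma> \<sigma>N P S. p \<subseteq> Sj)"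
  shows "proj \<sigma>N Sj = proj (P S) Sj"
proof -
  define \<theta> where "\<theta> = \<Sigma> - Dm \<Sigma> \<sigma>N P S"
  define u where "u = proj \<sigma>N \<theta>"
  define w where "w = proj (P S) \<theta>"
  have cnt: "\<forall>a. count_list u a = count_list w a" using setup_cnt u_def w_def \<theta>_def by metis
  have sub: "Sj \<subseteq> \<theta>" using Sj dm by (auto simp: \<theta>_def)
  have pu: "proj \<sigma>N Sj = filter (\<lambda>x. x \<in> Sj) u"
    unfolding u_def proj_def filter_filter using sub by (intro filter_cong) auto
  have pw: "proj (P S) Sj = filter (\<lambda>x. x \<in> Sj) w"
    unfolding w_def proj_def filter_filter using sub by (intro filter_cong) auto
  define F where "F = (\<lambda>p::'a \<times> nat. fst p \<in> Sj)"
  define X where "X = filter F (ann u)"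
  define Y where "Y = filter F (ann w)"
  have "X = Y"
  proof (rule list_eq_by_order)
    show "distinct X" "distinct Y" by (simp_all add: X_def Y_def ann_distinct)
    show "set X = set Y" using set_ann_eq[OF cnt] by (simp add: X_def Y_def)
    show "\<forall>p\<in>set X. \<forall>q\<in>set X. idx X p < idx X q \<longrightarrow> idx Y p < idx Y q"
    proof (intro ballI impI)
      fix p q assume pq: "p \<in> set X" "q \<in> set X" "idx X p < idx X q"
      have pin: "p \<in> set (ann u)" "q \<in> set (ann u)" "F p" "F q" using pq by (auto simp: X_def)
      have pinw: "p \<in> set (ann w)" "q \<in> set (ann w)" using pin set_ann_eq[OF cnt] by auto
      define j where "j = idx (ann u) p"
      define k where "k = idx (ann u) q"
      have jp: "j < length u" "ann u ! j = p" using idx_in[OF pin(1)] by (auto simp: j_def)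
      have kq: "k < length u" "ann u ! k = q" using idx_in[OF pin(2)] by (auto simp: k_def)
      have jk: "j < k" using pq(3) idx_filter[OF ann_distinct pin(1,2), of F] pin(3,4)
        by (simp add: X_def j_def k_def)
      have uj: "u ! j \<in> Sj" "u ! k \<in> Sj" using pin(3,4) jp kq by (auto simp: F_def ann_nth)
      have "\<not> pi0 u w j > pi0 u w k"
      proof
        assume "pi0 u w j > pi0 u w k"
        then have "{u ! j, u ! k} \<in> Do \<Sigma> \<sigma>N P S"
          using Do_eq[OF u_def[unfolded \<theta>_def] w_def[unfolded \<theta>_def]] jk kq by blast
        then show False using nd uj by auto
      qed
      moreover have pw': "ann w ! pi0 u w j = p" "ann w ! pi0 u w k = q"
        "pi0 u w j < length (ann w)" "pi0 u w k < length (ann w)"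
        using pi0_props[OF cnt jp(1)] pi0_props[OF cnt kq(1)] jp kq by auto
      moreover have "p \<noteq> q" using jk jp kq nth_eq_iff_index_eq[OF ann_distinct, of j u k] by auto
      ultimately have "pi0 u w j \<noteq> pi0 u w k" by force
      with \<open>\<not> pi0 u w j > pi0 u w k\<close> have lt: "pi0 u w j < pi0 u w k" by simp
      have "idx (ann w) p = pi0 u w j" "idx (ann w) q = pi0 u w k"
        using idx_nth[OF ann_distinct, of "pi0 u w j" w] idx_nth[OF ann_distinct, of "pi0 u w k" w] pw'
        by auto
      then show "idx Y p < idx Y q"
        using idx_filter[OF ann_distinct pinw, of F] pin(3,4) lt by (simp add: Y_def)
    qed
  qed
  then have "map fst (ann (filter (\<lambda>x. x \<in> Sj) u)) = map fst (ann (filter (\<lambda>x. x \<in> Sj) w))"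
    by (simp add: ann_filter X_def Y_def F_def)
  then show ?thesis using pu pw by (simp add: ann_fst)
qed

theorem mainTheorem8:
  fixes \<Sigma> :: "'a set" and \<Omega> :: "'a set set"
    and Obs :: "'a list \<Rightarrow> verdict option"
    and \<sigma>N :: "'a list" and P :: "'a set \<Rightarrow> 'a list"
  assumes fin: "finite \<Sigma>"
    and dist: "is_distribution \<Sigma> \<Omega>"
    and obs: "is_observation \<Sigma> Obs"
    and ced: "is_CED \<Omega> Obs \<sigma>N P"
  shows
    "(\<forall>\<delta>\<in>Discr \<Sigma> \<Omega> \<sigma>N P. \<forall>\<sigma>\<in>P ` \<Omega>. proj \<sigma>N \<delta> \<noteq> proj \<sigma> \<delta>) \<and>
     (\<forall>\<delta>\<in>Discr \<Sigma> \<Omega> \<sigma>N P. \<not> (\<exists>P'. (\<forall>S\<in>\<Omega>. P' S = P S) \<and> P' \<delta> \<in> P ` \<Omega> \<and>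
                                   is_CED (insert \<delta> \<Omega>) Obs \<sigma>N P')) \<and>
     (\<forall>\<Omega>'. is_distribution \<Sigma> \<Omega>' \<longrightarrow>
        (\<forall>\<delta>\<in>Discr \<Sigma> \<Omega> \<sigma>N P. \<forall>Sj\<in>\<Omega>'. \<not> \<delta> \<subseteq> Sj) \<longrightarrow>
        ((\<forall>Sj\<in>\<Omega>'. \<exists>\<sigma>\<in>P ` \<Omega>. proj \<sigma>N Sj = proj \<sigma> Sj) \<and>
        (\<exists>P''. (\<forall>S\<in>\<Omega>'. P'' S \<in> P ` \<Omega>) \<and> is_CED \<Omega>' Obs \<sigma>N P'')))"
proof -
  have neg: "Obs \<sigma>N = Some Neg" and pos: "\<forall>S\<in>\<Omega>. Obs (P S) = Some Pos \<and> proj \<sigma>N S = proj (P S) S"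
    using ced by (auto simp: is_CED_def)
  have 1: "proj \<sigma>N \<delta> \<noteq> proj \<sigma> \<delta>" if "\<delta> \<in> Discr \<Sigma> \<Omega> \<sigma>N P" "\<sigma> \<in> P ` \<Omega>" for \<delta> \<sigma>
    using that part1[of \<Sigma> \<Omega> \<sigma>N P \<delta>] by (auto simp: Discr_def)
  have 2: "\<not> (\<exists>P'. (\<forall>S\<in>\<Omega>. P' S = P S) \<and> P' \<delta> \<in> P ` \<Omega> \<and> is_CED (insert \<delta> \<Omega>) Obs \<sigma>N P')"
    if "\<delta> \<in> Discr \<Sigma> \<Omega> \<sigma>N P" for \<delta>
  proof
    assume "\<exists>P'. (\<forall>S\<in>\<Omega>. P' S = P S) \<and> P' \<delta> \<in> P ` \<Omega> \<and> is_CED (insert \<delta> \<Omega>) Obs \<sigma>N P'"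
    then obtain P' where "P' \<delta> \<in> P ` \<Omega>" "is_CED (insert \<delta> \<Omega>) Obs \<sigma>N P'" by blast
    then have "proj \<sigma>N \<delta> = proj (P' \<delta>) \<delta>" "P' \<delta> \<in> P ` \<Omega>" by (auto simp: is_CED_def)
    then show False using 1[OF that] by blast
  qed
  have 3: "((\<forall>Sj\<in>\<Omega>'. \<exists>\<sigma>\<in>P ` \<Omega>. proj \<sigma>N Sj = proj \<sigma> Sj) \<and>
        (\<exists>P''. (\<forall>S\<in>\<Omega>'. P'' S \<in> P ` \<Omega>) \<and> is_CED \<Omega>' Obs \<sigma>N P''))"
    if dist': "is_distribution \<Sigma> \<Omega>'" and nd: "\<forall>\<delta>\<in>Discr \<Sigma> \<Omega> \<sigma>N P. \<forall>Sj\<in>\<Omega>'. \<not> \<delta> \<subseteq> Sj" for \<Omega>'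
  proof
    have ex: "\<exists>\<sigma>\<in>P ` \<Omega>. proj \<sigma>N Sj = proj \<sigma> Sj" if Sj: "Sj \<in> \<Omega>'" for Sj
    proof (rule ccontr)
      assume c: "\<not> ?thesis"
      have "Sj \<subseteq> \<Sigma>" using dist' Sj by (auto simp: is_distribution_def)
      moreover have "\<forall>S\<in>\<Omega>. Sj \<inter> Dm \<Sigma> \<sigma>N P S \<noteq> {} \<or> (\<exists>p\<in>Do \<Sigma> \<sigma>N P S. p \<subseteq> Sj)"
      proof
        fix S assume S: "S \<in> \<Omega>"
        have "proj \<sigma>N Sj \<noteq> proj (P S) Sj" using c S by blast
        then show "Sj \<inter> Dm \<Sigma> \<sigma>N P S \<noteq> {} \<or> (\<exists>p\<in>Do \<Sigma> \<sigma>N P S. p \<subseteq> Sj)"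
          using part2[of Sj \<Sigma> \<sigma>N P S] \<open>Sj \<subseteq> \<Sigma>\<close> by blast
      qed
      ultimately have "Sj \<in> Discr \<Sigma> \<Omega> \<sigma>N P" by (simp add: Discr_def is_discrepancy_def)
      then show False using nd Sj by blast
    qed
    then show "\<forall>Sj\<in>\<Omega>'. \<exists>\<sigma>\<in>P ` \<Omega>. proj \<sigma>N Sj = proj \<sigma> Sj" by blast
    define P'' where "P'' = (\<lambda>S'. SOME \<sigma>. \<sigma> \<in> P ` \<Omega> \<and> proj \<sigma>N S' = proj \<sigma> S')"
    have P'': "P'' S' \<in> P ` \<Omega> \<and> proj \<sigma>N S' = proj (P'' S') S'" if "S' \<in> \<Omega>'" for S'
    proof -
      have "\<exists>\<sigma>. \<sigma> \<in> P ` \<Omega> \<and> proj \<sigma>N S' = proj \<sigma> S'" using ex[OF that] by blast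
      then show ?thesis unfolding P''_def by (rule someI_ex)
    qed
    show "\<exists>P''. (\<forall>S\<in>\<Omega>'. P'' S \<in> P ` \<Omega>) \<and> is_CED \<Omega>' Obs \<sigma>N P''"
    proof (intro exI conjI ballI)
      show "P'' S \<in> P ` \<Omega>" if "S \<in> \<Omega>'" for S using P'' that by blast
      show "is_CED \<Omega>' Obs \<sigma>N P''"
        unfolding is_CED_def
      proof (intro conjI ballI)
        show "Obs \<sigma>N = Some Neg" by (rule neg)
        fix S assume S: "S \<in> \<Omega>'"
        then obtain S0 where S0: "S0 \<in> \<Omega>" "P'' S = P S0" using P'' by blast
        show "Obs (P'' S) = Some Pos" using pos S0 by simp
        show "proj \<sigma>N S = proj (P'' S) S" using P'' S by blast
      qed
    qed
  qed
  have A: "\<forall>\<delta>\<in>Discr \<Sigma> \<Omega> \<sigma>N P. \<forall>\<sigma>\<in>P ` \<Omega>. proj \<sigma>N \<delta> \<noteq> proj \<sigma> \<delta>"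
    by (intro ballI) (rule 1)
  have B: "\<forall>\<delta>\<in>Discr \<Sigma> \<Omega> \<sigma>N P. \<not> (\<exists>P'. (\<forall>S\<in>\<Omega>. P' S = P S) \<and> P' \<delta> \<in> P ` \<Omega> \<and>
                                   is_CED (insert \<delta> \<Omega>) Obs \<sigma>N P')"
    by (intro ballI) (rule 2)
  have C: "\<forall>\<Omega>'. is_distribution \<Sigma> \<Omega>' \<longrightarrow>
        (\<forall>\<delta>\<in>Discr \<Sigma> \<Omega> \<sigma>N P. \<forall>Sj\<in>\<Omega>'. \<not> \<delta> \<subseteq> Sj) \<longrightarrow>
        ((\<forall>Sj\<in>\<Omega>'. \<exists>\<sigma>\<in>P ` \<Omega>. proj \<sigma>N Sj = proj \<sigma> Sj) \<and>
        (\<exists>P''. (\<forall>S\<in>\<Omega>'. P'' S \<in> P ` \<Omega>) \<and> is_CED \<Omega>' Obs \<sigma>N P''))"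
    by (intro allI impI) (rule 3)
  show ?thesis by (rule conjI[OF A conjI[OF B C]])
qed

end
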